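(* Let $n$ be a nonnegative integer. Suppose there exist a nonnegative integer $B$ and integers $x,y,z$ such that $3\mid n+B$ and $$\frac23(n+B)+B-5B^2=x^2+y^2+z^2+\frac{(x+y+z)^2}{2}\le B^2.$$ Then there exist nonnegative integers $x_0,y_0,z_0,w_0$ with $n=p_5(x_0)+p_5(y_0)+p_5(z_0)+2p_5(w_0)$.
   Context: For $k\in\mathbb{Z}$, $p_5(k)=k(3k-1)/2$. *)

theory Defs
  imports Complex_Main
begin

definition p5 :: "int \<Rightarrow> int" where
  "p5 k = k * (3 * k - 1) div 2"

end

theory Submission
  imports Defs
begin

lemma p5_twice: "2 * p5 k = k * (3 * k - 1)"
proof -
  have "even (k * (3 * k - 1))" by auto
  then show ?thesis unfolding p5_def by simp
qed

lemma sq_le_abs: fixes a b :: int assumes "a^2 \<le> b^2" "b \<ge> 0" shows "\<bar>a\<bar> \<le> b"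
  using assms by (metis abs_le_square_iff abs_of_nonneg)

theorem lemma2p2:
  fixes n B x y z :: int
  assumes "n \<ge> 0" and "B \<ge> 0" and "3 dvd (n + B)"
    and "(2/3) * real_of_int (n + B) + real_of_int B - 5 * (real_of_int B)^2
          = real_of_int (x^2 + y^2 + z^2) + real_of_int ((x + y + z)^2) / 2"
    and "real_of_int (x^2 + y^2 + z^2) + real_of_int ((x + y + z)^2) / 2 \<le> (real_of_int B)^2"
  shows "\<exists>x0 y0 z0 w0 :: int. x0 \<ge> 0 \<and> y0 \<ge> 0 \<and> z0 \<ge> 0 \<and> w0 \<ge> 0 \<and>
           n = p5 x0 + p5 y0 + p5 z0 + 2 * p5 w0"
proof -
  define s where "s = x + y + z"
  have r1: "real_of_int (4*(n+B) + 6*B - 30*B^2) = real_of_int (6*(x^2+y^2+z^2) + 3*s^2)"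
    using assms(4) unfolding s_def by (simp add: field_simps)
  hence e1: "4*(n+B) + 6*B - 30*B^2 = 6*(x^2+y^2+z^2) + 3*s^2" by linarith
  have r2: "real_of_int (2*(x^2+y^2+z^2) + s^2) \<le> real_of_int (2*B^2)"
    using assms(5) unfolding s_def by (simp add: field_simps)
  hence e2: "2*(x^2+y^2+z^2) + s^2 \<le> 2*B^2" by linarith
  have "even (3*s^2)" using e1 by (metis dvd_add_right_iff dvd_diff even_mult_iff even_numeral dvd_mult)
  hence "even s" by simp
  then obtain k where k: "s = 2*k" by blast
  have "x^2 \<le> B^2" "y^2 \<le> B^2" "z^2 \<le> B^2" "k^2 \<le> B^2"
    using e2 k by (auto simp: power2_eq_square) (smt (verit) zero_le_square)+
  hence "\<bar>x\<bar> \<le> B" "\<bar>y\<bar> \<le> B" "\<bar>z\<bar> \<le> B" "\<bar>k\<bar> \<le> B" using assms(2) sq_le_abs by auto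
  moreover have "2*n = 2*p5 (B+x) + 2*p5 (B+y) + 2*p5 (B+z) + 2*(2*p5 (B-k))"
  proof -
    obtain m where m: "n + B = 3*m" using assms(3) by blast
    have "2*n = 6*m - 2*B" using m by simp
    have sx: "x+y+z = 2*k" using k s_def by simp
    have bx: "B*x+B*y+B*z = 2*B*k" using sx by (metis distrib_left mult.assoc mult.left_commute)
    have e3: "4*(n+B) + 6*B - 30*B^2 = 6*(x^2+y^2+z^2) + 12*k^2" using e1 k by (simp add: power2_eq_square)
    show ?thesis unfolding p5_twice using e3 sx bx
      by (simp add: algebra_simps power2_eq_square)
  qed
  ultimately show ?thesis by (intro exI[of _ "B+x"] exI[of _ "B+y"] exI[of _ "B+z"] exI[of _ "B-k"]) auto
qed

end
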